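(* Suppose $\kappa<\lambda$ are infinite regular cardinals and $d:[\lambda]^2\to\kappa$ is subadditive and unbounded. Then there is a strong $\lambda$-system $S=\langle\lambda\times 1,\mathcal{R}\rangle$ such that $|\mathcal{R}|=\kappa$ and $S$ has no cofinal branch.
   Context: $d:[\lambda]^2\to\kappa$ (written $d(\alpha,\beta)$ for $\alpha<\beta$) is subadditive if for all $\alpha<\beta<\gamma<\lambda$: $d(\alpha,\gamma)\le\max\{d(\alpha,\beta),d(\beta,\gamma)\}$ and $d(\alpha,\beta)\le\max\{d(\alpha,\gamma),d(\beta,\gamma)\}$; it is unbounded if for every unbounded $I\subseteq\lambda$, $d``[I]^2$ is unbounded in $\kappa$. A relation $R$ is tree-like if $a<_R c$ and $b<_R c$ imply $a,b$ are $R$-comparable ($a=b$, $a<_Rb$ or $b<_Ra$). A $\lambda$-system $\langle I\times\nu,\mathcal{R}\rangle$ consists of an unbounded $I\subseteq\lambda$, $0<\nu<\lambda$, levels $S_\alpha=\{\alpha\}\times\nu$ (with $S$ their union), and a set $\mathcal{R}$ of binary transitive tree-like relations on $S$ with $|\mathcal{R}|<\lambda$, such that $(\alpha_0,\beta_0)<_R(\alpha_1,\beta_1)$ implies $\alpha_0<\alpha_1$, and for all $\alpha_0<\alpha_1$ in $I$ some elements of the two levels are related by some $R\in\mathcal{R}$. It is strong if for all $\alpha_0<\alpha_1$ in $I$ and every $\beta_1<\nu$ there are $\beta_0<\nu$, $R\in\mathcal{R}$ with $(\alpha_0,\beta_0)<_R(\alpha_1,\beta_1)$. A branch through $R$ is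 a set of pairwise $R$-comparable elements; it is cofinal if it meets unboundedly many levels. *)

theory Defs
  imports Main
begin

(* Cardinals are represented as cardinal-order well-orders (library: Card_order,
   Cinfinite, regularCard). The ordinals below a cardinal L are the elements of
   Field L, ordered by L (non-strictly); the strict order is "lt". *)

definition lt :: "'a rel \<Rightarrow> 'a \<Rightarrow> 'a \<Rightarrow> bool" where
  "lt r a b \<longleftrightarrow> (a, b) \<in> r \<and> a \<noteq> b"

definition unbounded_in :: "'a set \<Rightarrow> 'a rel \<Rightarrow> bool" where
  "unbounded_in I r \<longleftrightarrow> I \<subseteq> Field r \<and> (\<forall>a\<in>Field r. \<exists>b\<in>I. (a, b) \<in> r)"

(* d : [lambda]^2 \<rightarrow> kappa, written d a b for a < b *)
definition colouring :: "'l rel \<Rightarrow> 'k rel \<Rightarrow> ('l \<Rightarrow> 'l \<Rightarrow> 'k) \<Rightarrow> bool" where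
  "colouring L K d \<longleftrightarrow> (\<forall>a\<in>Field L. \<forall>b\<in>Field L. lt L a b \<longrightarrow> d a b \<in> Field K)"

definition le_max :: "'k rel \<Rightarrow> 'k \<Rightarrow> 'k \<Rightarrow> 'k \<Rightarrow> bool" where
  "le_max K x y z \<longleftrightarrow> (x, y) \<in> K \<or> (x, z) \<in> K"

definition subadditive :: "'l rel \<Rightarrow> 'k rel \<Rightarrow> ('l \<Rightarrow> 'l \<Rightarrow> 'k) \<Rightarrow> bool" where
  "subadditive L K d \<longleftrightarrow>
     (\<forall>a\<in>Field L. \<forall>b\<in>Field L. \<forall>c\<in>Field L. lt L a b \<and> lt L b c \<longrightarrow>
        le_max K (d a c) (d a b) (d b c) \<and> le_max K (d a b) (d a c) (d b c))"

definition unbounded_col :: "'l rel \<Rightarrow> 'k rel \<Rightarrow> ('l \<Rightarrow> 'l \<Rightarrow> 'k) \<Rightarrow> bool" where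
  "unbounded_col L K d \<longleftrightarrow>
     (\<forall>I. unbounded_in I L \<longrightarrow>
        unbounded_in {d a b | a b. a \<in> I \<and> b \<in> I \<and> lt L a b} K)"

definition ord_one :: "'a rel \<Rightarrow> 'a" where
  "ord_one L = wo_rel.suc L {wo_rel.minim L (Field L)}"

definition below :: "'a rel \<Rightarrow> 'a \<Rightarrow> 'a set" where
  "below L nu = {b \<in> Field L. lt L b nu}"

definition tree_like :: "'a rel \<Rightarrow> bool" where
  "tree_like R \<longleftrightarrow> (\<forall>a b c. (a, c) \<in> R \<and> (b, c) \<in> R \<longrightarrow> a = b \<or> (a, b) \<in> R \<or> (b, a) \<in> R)"

(* the lambda-system <I \<times> nu, \<R>>; nodes are pairs (alpha, beta) with alpha \<in> I, beta < nu *)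
definition lambda_system :: "'l rel \<Rightarrow> 'l set \<Rightarrow> 'l \<Rightarrow> ('l \<times> 'l) rel set \<Rightarrow> bool" where
  "lambda_system L I nu \<R> \<longleftrightarrow>
     unbounded_in I L \<and> nu \<in> Field L \<and> lt L (wo_rel.minim L (Field L)) nu \<and>
     ordLess2 (card_of \<R>) L \<and>
     (\<forall>R\<in>\<R>. R \<subseteq> (I \<times> below L nu) \<times> (I \<times> below L nu) \<and> trans R \<and> tree_like R \<and>
        (\<forall>a0 b0 a1 b1. ((a0, b0), (a1, b1)) \<in> R \<longrightarrow> lt L a0 a1)) \<and>
     (\<forall>a0\<in>I. \<forall>a1\<in>I. lt L a0 a1 \<longrightarrow>
        (\<exists>b0\<in>below L nu. \<exists>b1\<in>below L nu. \<exists>R\<in>\<R>. ((a0, b0), (a1, b1)) \<in> R))"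

definition strong_lambda_system :: "'l rel \<Rightarrow> 'l set \<Rightarrow> 'l \<Rightarrow> ('l \<times> 'l) rel set \<Rightarrow> bool" where
  "strong_lambda_system L I nu \<R> \<longleftrightarrow> lambda_system L I nu \<R> \<and>
     (\<forall>a0\<in>I. \<forall>a1\<in>I. lt L a0 a1 \<longrightarrow>
        (\<forall>b1\<in>below L nu. \<exists>b0\<in>below L nu. \<exists>R\<in>\<R>. ((a0, b0), (a1, b1)) \<in> R))"

definition branch :: "('l \<times> 'l) rel \<Rightarrow> ('l \<times> 'l) set \<Rightarrow> bool" where
  "branch R B \<longleftrightarrow> (\<forall>x\<in>B. \<forall>y\<in>B. x = y \<or> (x, y) \<in> R \<or> (y, x) \<in> R)"

definition cofinal_branch :: "'l rel \<Rightarrow> ('l \<times> 'l) rel \<Rightarrow> ('l \<times> 'l) set \<Rightarrow> bool" where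
  "cofinal_branch L R B \<longleftrightarrow> branch R B \<and> unbounded_in (fst ` B) L"

definition has_cofinal_branch :: "'l rel \<Rightarrow> ('l \<times> 'l) rel set \<Rightarrow> bool" where
  "has_cofinal_branch L \<R> \<longleftrightarrow> (\<exists>R\<in>\<R>. \<exists>B. cofinal_branch L R B)"

end

theory Submission
  imports Defs
begin

theorem mainTheorem8:
  fixes L :: "'l rel" and K :: "'k rel" and d :: "'l \<Rightarrow> 'l \<Rightarrow> 'k"
  assumes "Cinfinite K" and "regularCard K"
    and "Cinfinite L" and "regularCard L"
    and "ordLess2 K L"
    and "colouring L K d" and "subadditive L K d" and "unbounded_col L K d"
  shows "\<exists>\<R>. strong_lambda_system L (Field L) (ord_one L) \<R> \<and> ordIso2 (card_of \<R>) K
              \<and> \<not> has_cofinal_branch L \<R>"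
proof -
  have WK: "Well_order K" and WL: "Well_order L"
    using assms(1,3) card_order_on_well_order_on by blast+
  have woK: "wo_rel K" and woL: "wo_rel L" using WK WL wo_rel_def by blast+
  have antK: "antisym K" and transK: "trans K" using WK
    unfolding well_order_on_def linear_order_on_def partial_order_on_def preorder_on_def by auto
  have antL: "antisym L" and transL: "trans L" and reflL: "refl_on (Field L) L" using WL
    unfolding well_order_on_def linear_order_on_def partial_order_on_def preorder_on_def by auto
  have totL: "total_on (Field L) L" using WL
    unfolding well_order_on_def linear_order_on_def by auto
  have reflK: "refl_on (Field K) K" using WK
    unfolding well_order_on_def linear_order_on_def partial_order_on_def preorder_on_def by auto
  have nonemp: "Field L \<noteq> {}" using assms(3) unfolding cinfinite_def by auto
  define m where "m = wo_rel.minim L (Field L)"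
  have mF: "m \<in> Field L" using wo_rel.minim_inField[OF woL _ nonemp] m_def by auto
  have mleast: "\<And>b. b \<in> Field L \<Longrightarrow> (m, b) \<in> L"
    using wo_rel.minim_least[OF woL] m_def by blast
  obtain y where y: "y \<in> Field L" "m \<noteq> y" "(m, y) \<in> L" using Cinfinite_limit[OF mF assms(3)] by blast
  have Ab: "AboveS L {m} \<noteq> {}" using y unfolding AboveS_def by auto
  have one: "ord_one L = wo_rel.suc L {m}" unfolding ord_one_def m_def by simp
  have oneF: "ord_one L \<in> Field L" using wo_rel.suc_inField[OF woL _ Ab] mF one by auto
  have onegt: "lt L m (ord_one L)" using wo_rel.suc_greater[OF woL _ Ab] mF one unfolding lt_def by auto
  have below1: "below L (ord_one L) = {m}"
  proof -
    { fix b assume b: "b \<in> Field L" "lt L b (ord_one L)" "b \<noteq> m"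
      have "b \<in> AboveS L {m}" using b mleast unfolding AboveS_def by auto
      hence "(ord_one L, b) \<in> L" using wo_rel.suc_least_AboveS[OF woL] one by auto
      hence False using b antL unfolding lt_def antisym_def by blast }
    thus ?thesis using mF onegt unfolding below_def by auto
  qed
  define Rv where "Rv v = {(x, y). snd x = m \<and> snd y = m \<and> fst x \<in> Field L \<and> fst y \<in> Field L \<and> lt L (fst x) (fst y) \<and> (d (fst x) (fst y), v) \<in> K}" for v
  have Rv_mem: "\<And>a b a' b' v. ((a, b), (a', b')) \<in> Rv v \<longleftrightarrow> b = m \<and> b' = m \<and> a \<in> Field L \<and> a' \<in> Field L \<and> lt L a a' \<and> (d a a', v) \<in> K"
    unfolding Rv_def by auto
  define V where "V = {d a b | a b. a \<in> Field L \<and> b \<in> Field L \<and> lt L a b}"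
  define RR where "RR = Rv ` V"
  have col: "\<And>a b. a \<in> Field L \<Longrightarrow> b \<in> Field L \<Longrightarrow> lt L a b \<Longrightarrow> d a b \<in> Field K"
    using assms(6) unfolding colouring_def by blast
  have sub1: "\<And>a b c. a \<in> Field L \<Longrightarrow> b \<in> Field L \<Longrightarrow> c \<in> Field L \<Longrightarrow> lt L a b \<Longrightarrow> lt L b c \<Longrightarrow>
      le_max K (d a c) (d a b) (d b c) \<and> le_max K (d a b) (d a c) (d b c)"
    using assms(7) unfolding subadditive_def by blast
  have ltL_trans: "\<And>a b c. lt L a b \<Longrightarrow> lt L b c \<Longrightarrow> lt L a c"
    using transL antL unfolding lt_def trans_def antisym_def by blast
  have unbV: "unbounded_in V K"
    using assms(8) reflL unfolding unbounded_col_def unbounded_in_def V_def refl_on_def by blast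
  have VK: "V \<subseteq> Field K" using unbV unfolding unbounded_in_def by auto
  have cofV: "cofinal V K"
    unfolding cofinal_def
  proof
    fix a assume a: "a \<in> Field K"
    obtain z where z: "z \<in> Field K" "a \<noteq> z" "(a, z) \<in> K" using Cinfinite_limit[OF a assms(1)] by blast
    obtain w where w: "w \<in> V" "(z, w) \<in> K" using unbV z unfolding unbounded_in_def by blast
    have "(a, w) \<in> K" using z w transK unfolding trans_def by blast
    moreover have "a \<noteq> w" using z w antK unfolding antisym_def by blast
    ultimately show "\<exists>b\<in>V. a \<noteq> b \<and> (a, b) \<in> K" using w by blast
  qed
  have cardV: "ordIso2 (card_of V) K" using assms(2) VK cofV unfolding regularCard_def by blast
  have injRv: "inj_on Rv V"
  proof (rule inj_onI)
    fix v w assume v: "v \<in> V" and w: "w \<in> V" and eq: "Rv v = Rv w"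
    have key: "(v, w) \<in> K" if v: "v \<in> V" and w: "w \<in> V" and eq: "Rv v = Rv w" for v w
    proof -
      obtain a b where ab: "a \<in> Field L" "b \<in> Field L" "lt L a b" "v = d a b" using v V_def by blast
      have "(d a b, d a b) \<in> K" using col[OF ab(1-3)] reflK by (meson refl_onD)
      hence "((a, m), (b, m)) \<in> Rv v" using ab by (simp add: Rv_mem)
      hence "((a, m), (b, m)) \<in> Rv w" using eq by simp
      thus ?thesis using ab Rv_mem by auto
    qed
    show "v = w" using key[OF v w eq] key[OF w v eq[symmetric]] antK unfolding antisym_def by blast
  qed
  have cardRR: "ordIso2 (card_of RR) K"
  proof -
    have "ordIso2 (card_of RR) (card_of V)" using injRv card_of_ordIso[of V RR] RR_def
      by (metis bij_betw_imageI ordIso_symmetric)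
    thus ?thesis using cardV ordIso_transitive by blast
  qed
  have RRL: "ordLess2 (card_of RR) L" using cardRR assms(5) ordIso_ordLess_trans by blast
  have Rprops: "R \<subseteq> (Field L \<times> below L (ord_one L)) \<times> (Field L \<times> below L (ord_one L)) \<and> trans R \<and> tree_like R \<and>
        (\<forall>a0 b0 a1 b1. ((a0, b0), (a1, b1)) \<in> R \<longrightarrow> lt L a0 a1)" if R: "R \<in> RR" for R
  proof -
    obtain v where v: "v \<in> V" "R = Rv v" using R RR_def by blast
    have p1: "R \<subseteq> (Field L \<times> below L (ord_one L)) \<times> (Field L \<times> below L (ord_one L))"
    proof
      fix p assume p: "p \<in> R"
      obtain a xa b yb where pe: "p = ((a, xa), (b, yb))" by (metis prod.collapse)
      show "p \<in> (Field L \<times> below L (ord_one L)) \<times> (Field L \<times> below L (ord_one L))"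
        using p pe v below1 Rv_mem by auto
    qed
    have p2: "trans R"
      unfolding trans_def
    proof (intro allI impI)
      fix x y z assume xy: "(x, y) \<in> R" and yz: "(y, z) \<in> R"
      obtain a xa where xa: "x = (a, xa)" by (cases x)
      obtain b ya where ya: "y = (b, ya)" by (cases y)
      obtain c za where za: "z = (c, za)" by (cases z)
      have ab: "x = (a, m)" "y = (b, m)" "a \<in> Field L" "b \<in> Field L" "lt L a b" "(d a b, v) \<in> K"
        using xy v xa ya Rv_mem by auto
      have c: "z = (c, m)" "c \<in> Field L" "lt L b c" "(d b c, v) \<in> K"
        using yz v ya za Rv_mem by auto
      have "le_max K (d a c) (d a b) (d b c)" using sub1 ab c by blast
      hence "(d a c, v) \<in> K" using ab c transK unfolding le_max_def trans_def by blast
      thus "(x, z) \<in> R" using v ab c ltL_trans Rv_mem by auto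
    qed
    have p3: "tree_like R"
      unfolding tree_like_def
    proof (intro allI impI)
      fix x y z assume h: "(x, z) \<in> R \<and> (y, z) \<in> R"
      obtain a xa where xa: "x = (a, xa)" by (cases x)
      obtain b ya where ya: "y = (b, ya)" by (cases y)
      obtain c za where za: "z = (c, za)" by (cases z)
      have ac: "x = (a, m)" "z = (c, m)" "a \<in> Field L" "c \<in> Field L" "lt L a c" "(d a c, v) \<in> K"
        using h v xa za Rv_mem by auto
      have bc: "y = (b, m)" "b \<in> Field L" "lt L b c" "(d b c, v) \<in> K"
        using h v ya za Rv_mem by auto
      show "x = y \<or> (x, y) \<in> R \<or> (y, x) \<in> R"
      proof (cases "a = b")
        case True thus ?thesis using ac bc by simp
      next
        case False
        hence "lt L a b \<or> lt L b a" using totL ac bc unfolding lt_def total_on_def by blast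
        thus ?thesis
        proof
          assume ab: "lt L a b"
          have "le_max K (d a b) (d a c) (d b c)" using sub1 ab ac bc by blast
          hence "(d a b, v) \<in> K" using ac bc transK unfolding le_max_def trans_def by blast
          thus ?thesis using v ab ac bc Rv_mem by auto
        next
          assume ba: "lt L b a"
          have "le_max K (d b a) (d b c) (d a c)" using sub1 ba ac bc by blast
          hence "(d b a, v) \<in> K" using ac bc transK unfolding le_max_def trans_def by blast
          thus ?thesis using v ba ac bc Rv_mem by auto
        qed
      qed
    qed
    have p4: "\<forall>a0 b0 a1 b1. ((a0, b0), (a1, b1)) \<in> R \<longrightarrow> lt L a0 a1"
      using v Rv_mem by auto
    show ?thesis using p1 p2 p3 p4 by blast
  qed
  have strong: "\<forall>a0\<in>Field L. \<forall>a1\<in>Field L. lt L a0 a1 \<longrightarrow>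
        (\<forall>b1\<in>below L (ord_one L). \<exists>b0\<in>below L (ord_one L). \<exists>R\<in>RR. ((a0, b0), (a1, b1)) \<in> R)"
  proof (intro ballI impI)
    fix a0 a1 b1 assume a: "a0 \<in> Field L" "a1 \<in> Field L" "lt L a0 a1" and b1: "b1 \<in> below L (ord_one L)"
    have vV: "d a0 a1 \<in> V" using a V_def by blast
    have "(d a0 a1, d a0 a1) \<in> K" using col[OF a] reflK by (meson refl_onD)
    hence "((a0, m), (a1, m)) \<in> Rv (d a0 a1)"
      using a by (simp add: Rv_mem)
    moreover have "Rv (d a0 a1) \<in> RR" using vV RR_def by blast
    moreover have "b1 = m" "m \<in> below L (ord_one L)" using b1 below1 by auto
    ultimately show "\<exists>b0\<in>below L (ord_one L). \<exists>R\<in>RR. ((a0, b0), (a1, b1)) \<in> R"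
      by blast
  qed
  have unbF: "unbounded_in (Field L) L" using reflL unfolding unbounded_in_def refl_on_def by blast
  have sys: "strong_lambda_system L (Field L) (ord_one L) RR"
    unfolding strong_lambda_system_def lambda_system_def
  proof (intro conjI)
    show "\<forall>R\<in>RR. R \<subseteq> (Field L \<times> below L (ord_one L)) \<times> (Field L \<times> below L (ord_one L)) \<and> trans R \<and> tree_like R \<and>
        (\<forall>a0 b0 a1 b1. ((a0, b0), (a1, b1)) \<in> R \<longrightarrow> lt L a0 a1)" using Rprops by blast
    show "\<forall>a0\<in>Field L. \<forall>a1\<in>Field L. lt L a0 a1 \<longrightarrow>
        (\<exists>b0\<in>below L (ord_one L). \<exists>b1\<in>below L (ord_one L). \<exists>R\<in>RR. ((a0, b0), (a1, b1)) \<in> R)"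
    proof (intro ballI impI)
      fix a0 a1 assume "a0 \<in> Field L" "a1 \<in> Field L" "lt L a0 a1"
      moreover have "m \<in> below L (ord_one L)" using below1 by auto
      ultimately show "\<exists>b0\<in>below L (ord_one L). \<exists>b1\<in>below L (ord_one L). \<exists>R\<in>RR. ((a0, b0), (a1, b1)) \<in> R"
        using strong by blast
    qed
  qed (use unbF oneF onegt m_def RRL strong in auto)
  have nobranch: "\<not> has_cofinal_branch L RR"
  proof
    assume "has_cofinal_branch L RR"
    then obtain R B where R: "R \<in> RR" and B: "branch R B" and U: "unbounded_in (fst ` B) L"
      unfolding has_cofinal_branch_def cofinal_branch_def by blast
    obtain v where v: "v \<in> V" "R = Rv v" using R RR_def by blast
    have vK: "v \<in> Field K" using v VK by auto
    have small: "(e, v) \<in> K" if e: "e \<in> {d a b | a b. a \<in> fst ` B \<and> b \<in> fst ` B \<and> lt L a b}" for e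
    proof -
      obtain a b where ab: "a \<in> fst ` B" "b \<in> fst ` B" "lt L a b" "e = d a b" using e by blast
      obtain x y where xy: "x \<in> B" "y \<in> B" "fst x = a" "fst y = b" using ab by blast
      have "x \<noteq> y" using xy ab unfolding lt_def by auto
      hence "(x, y) \<in> R \<or> (y, x) \<in> R" using B xy unfolding branch_def by blast
      moreover have "(y, x) \<notin> R"
      proof
        assume "(y, x) \<in> R"
        hence "lt L b a" using v xy unfolding Rv_def by auto
        thus False using ab antL unfolding lt_def antisym_def by blast
      qed
      ultimately have "(x, y) \<in> R" by blast
      thus ?thesis using v xy ab unfolding Rv_def by auto
    qed
    have U2: "unbounded_in {d a b | a b. a \<in> fst ` B \<and> b \<in> fst ` B \<and> lt L a b} K"
      using assms(8) U unfolding unbounded_col_def by blast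
    obtain z where z: "z \<in> Field K" "v \<noteq> z" "(v, z) \<in> K" using Cinfinite_limit[OF vK assms(1)] by blast
    obtain e where e: "e \<in> {d a b | a b. a \<in> fst ` B \<and> b \<in> fst ` B \<and> lt L a b}" "(z, e) \<in> K"
    proof -
      have "\<forall>a\<in>Field K. \<exists>b\<in>{d a b | a b. a \<in> fst ` B \<and> b \<in> fst ` B \<and> lt L a b}. (a, b) \<in> K"
        using U2 unfolding unbounded_in_def by (rule conjunct2)
      hence "\<exists>b\<in>{d a b | a b. a \<in> fst ` B \<and> b \<in> fst ` B \<and> lt L a b}. (z, b) \<in> K"
        using z(1) by (rule bspec)
      thus ?thesis using that by (rule bexE)
    qed
    have "(z, v) \<in> K" using small[OF e(1)] e(2) transK unfolding trans_def by blast
    thus False using z antK unfolding antisym_def by blast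
  qed
  show ?thesis using sys cardRR nobranch by blast
qed

end
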